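(* For every integer $n\ge0$, $$\sum_{k=0}^{n}\lambda^{n-k}B^{(c)}_{k,\lambda}(x,y)S_2(n,k)=\sum_{m=0}^{n}\sum_{l=0}^{\lfloor m/2\rfloor}\frac{\lambda^{n-m}}{n-m+1}\binom{n}{m}\binom{m}{2l}(-1)^l y^{2l}B_{m-2l}(x).$$
   Context: Let $\lambda$ be a nonzero real number; generating functions are formal power series in $t$. $e_\lambda^{x}(t)=(1+\lambda t)^{x/\lambda}$ and $\cos_\lambda^{(y)}(t)=\cos\!\big(\tfrac{y}{\lambda}\log(1+\lambda t)\big)$. The type 2 degenerate cosine-Bernoulli polynomials are defined by $\frac{t}{e_\lambda^{1/2}(t)-e_\lambda^{-1/2}(t)}e_\lambda^{x}(t)\cos_\lambda^{(y)}(t)=\sum_{n\ge0}B^{(c)}_{n,\lambda}(x,y)\frac{t^n}{n!}$. The (non-degenerate) type 2 Bernoulli polynomials are defined by $\frac{t}{e^{t/2}-e^{-t/2}}e^{xt}=\sum_{n\ge0}B_n(x)\frac{t^n}{n!}$. $S_2(n,k)$ are the Stirling numbers of the second kind, $\frac{1}{k!}(e^t-1)^k=\sum_{n\ge k}S_2(n,k)\frac{t^n}{n!}$. *)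

theory Defs
  imports "HOL-Computational_Algebra.Formal_Power_Series" "HOL-Combinatorics.Stirling"
begin

definition deg_exp :: "real \<Rightarrow> real \<Rightarrow> real fps" where
  "deg_exp lam x = fps_binomial (x / lam) oo (fps_const lam * fps_X)"

definition deg_cos :: "real \<Rightarrow> real \<Rightarrow> real fps" where
  "deg_cos lam y = fps_cos (y / lam) oo (fps_ln 1 oo (fps_const lam * fps_X))"

definition deg_cos_bernoulli :: "real \<Rightarrow> nat \<Rightarrow> real \<Rightarrow> real \<Rightarrow> real" where
  "deg_cos_bernoulli lam n x y =
     fact n * fps_nth (fps_X / (deg_exp lam (1/2) - deg_exp lam (-1/2))
                 * deg_exp lam x * deg_cos lam y) n"

definition bernoulli2 :: "nat \<Rightarrow> real \<Rightarrow> real" where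
  "bernoulli2 n x =
     fact n * fps_nth (fps_X / (fps_exp (1/2) - fps_exp (-1/2)) * fps_exp x) n"

end

theory Submission
  imports Defs
begin
unbundle fps_syntax

lemma stirling_fps:
  fixes lam :: real
  shows "fact n * ((fps_exp lam - 1) ^ k) $ n = lam ^ n * fact k * real (Stirling n k)"
proof (induction n arbitrary: k)
  case 0
  then show ?case by (cases k) (simp_all add: fps_nth_power_0)
next
  case (Suc n)
  show ?case
  proof (cases k)
    case 0
    then show ?thesis by simp
  next
    case (Suc j)
    let ?E = "fps_exp lam - 1"
    have d0: "fps_deriv (?E ^ Suc j) = fps_const (of_nat (Suc j)) * (fps_const lam * fps_exp lam) * ?E ^ j"
      by (simp add: fps_deriv_power del: power_Suc)
    have ex: "fps_exp lam = ?E + 1" by simp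
    have d: "fps_deriv (?E ^ Suc j) = fps_const (of_nat (Suc j) * lam) * (?E ^ Suc j + ?E ^ j)"
      unfolding d0 by (subst (2) ex) (simp add: algebra_simps)
    have "(fps_deriv (?E ^ Suc j)) $ n = of_nat (Suc j) * lam * ((?E ^ Suc j) $ n + (?E ^ j) $ n)"
      by (subst d) simp
    hence e: "real (Suc n) * (?E ^ Suc j) $ Suc n = of_nat (Suc j) * lam * ((?E ^ Suc j) $ n + (?E ^ j) $ n)"
      by (simp only: fps_deriv_nth Suc_eq_plus1 of_nat_add)
    have "fact (Suc n) * (?E ^ Suc j) $ Suc n = fact n * (real (Suc n) * (?E ^ Suc j) $ Suc n)"
      by simp
    also have "\<dots> = of_nat (Suc j) * lam * (fact n * (?E ^ Suc j) $ n + fact n * (?E ^ j) $ n)"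
      by (subst e) (simp add: algebra_simps)
    also have "\<dots> = of_nat (Suc j) * lam * (lam ^ n * fact (Suc j) * real (Stirling n (Suc j)) + lam ^ n * fact j * real (Stirling n j))"
      by (simp only: Suc.IH)
    also have "\<dots> = lam ^ Suc n * fact (Suc j) * real (Stirling (Suc n) (Suc j))"
      by (simp add: algebra_simps)
    finally show ?thesis using Suc by simp
  qed
qed

lemma binom_exp:
  fixes a c :: real
  shows "fps_binomial a oo (fps_exp c - 1) = fps_exp (a * c)"
proof -
  let ?E = "fps_exp c - 1"
  have E0: "?E $ 0 = 0" by simp
  have one: "(1 + fps_X) oo ?E = fps_exp c"
    using E0 by (simp add: fps_compose_add_distrib)
  have "fps_deriv (fps_binomial a oo ?E) = (fps_deriv (fps_binomial a) oo ?E) * fps_deriv ?E"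
    by (rule fps_compose_deriv[OF E0])
  also have "\<dots> = ((fps_const a * fps_binomial a) oo ?E) / ((1 + fps_X) oo ?E) * (fps_const c * fps_exp c)"
    by (simp add: fps_binomial_deriv fps_divide_compose[OF E0])
  also have "\<dots> = fps_const (a * c) * (fps_binomial a oo ?E)"
    unfolding one using E0 by (simp add: fps_compose_mult_distrib fps_divide_unit inverse_mult_eq_1' field_simps)
  finally have "fps_deriv (fps_binomial a oo ?E) = fps_const (a * c) * (fps_binomial a oo ?E)" .
  hence "fps_binomial a oo ?E = fps_const ((fps_binomial a oo ?E) $ 0) * fps_exp (a*c)"
    using fps_exp_unique_ODE by blast
  thus ?thesis by simp
qed

definition TT :: "real \<Rightarrow> real fps" where
  "TT lam = fps_const (1/lam) * (fps_exp lam - 1)"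

lemma TT0[simp]: "TT lam $ 0 = 0" by (simp add: TT_def)

lemma L1: assumes "lam \<noteq> 0" shows "(fps_const lam * fps_X) oo TT lam = fps_exp lam - 1"
  using assms by (simp add: fps_compose_mult_distrib TT_def)

lemma L2: assumes "lam \<noteq> 0" shows "deg_exp lam a oo TT lam = fps_exp a"
proof -
  have "deg_exp lam a oo TT lam = fps_binomial (a / lam) oo ((fps_const lam * fps_X) oo TT lam)"
    unfolding deg_exp_def by (rule fps_compose_assoc[symmetric]) simp_all
  also have "\<dots> = fps_exp a" using assms by (simp add: L1 binom_exp)
  finally show ?thesis .
qed

lemma L3a: "fps_ln (1::real) oo (fps_exp 1 - 1) = fps_X"
proof -
  let ?a = "fps_exp (1::real) - 1"
  have i: "fps_inv ?a = fps_ln 1" using fps_ln_fps_exp_inv[of "1::real"] by simp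
  have ii: "fps_inv (fps_inv ?a) = ?a" by (rule fps_inv_idempotent) simp_all
  have "fps_inv ?a oo fps_inv (fps_inv ?a) = fps_X"
    by (rule fps_inv_right) (simp_all add: i fps_ln_nth)
  thus ?thesis using i ii by metis
qed

lemma L3: "fps_ln (1::real) oo (fps_exp lam - 1) = fps_const lam * fps_X"
proof -
  have e: "fps_exp lam - 1 = (fps_exp 1 - 1) oo (fps_const lam * fps_X)"
    by (simp add: fps_compose_sub_distrib)
  have "fps_ln (1::real) oo (fps_exp lam - 1) = (fps_ln 1 oo (fps_exp 1 - 1)) oo (fps_const lam * fps_X)"
    unfolding e by (rule fps_compose_assoc) simp_all
  also have "\<dots> = fps_const lam * fps_X" unfolding L3a by simp
  finally show ?thesis .
qed

lemma L4: assumes "lam \<noteq> 0" shows "deg_cos lam y oo TT lam = fps_cos y"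
proof -
  have "deg_cos lam y oo TT lam = fps_cos (y / lam) oo ((fps_ln 1 oo (fps_const lam * fps_X)) oo TT lam)"
    unfolding deg_cos_def by (rule fps_compose_assoc[symmetric]) simp_all
  also have "(fps_ln 1 oo (fps_const lam * fps_X)) oo TT lam = fps_ln 1 oo ((fps_const lam * fps_X) oo TT lam)"
    by (rule fps_compose_assoc[symmetric]) simp_all
  also have "\<dots> = fps_const lam * fps_X" using assms by (simp add: L1 L3)
  also have "fps_cos (y / lam) oo (fps_const lam * fps_X) = fps_cos y"
    using assms by (simp add: fps_compose_linear fps_cos_def fps_eq_iff power_divide)
  finally show ?thesis .
qed

lemma div_X_mult:
  fixes D :: "real fps"
  assumes "D $ 0 = 0" "D $ 1 \<noteq> 0"
  shows "fps_X / D * D = fps_X"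
proof -
  have nz: "D \<noteq> 0" using assms by auto
  have "subdegree D \<le> 1" using assms by (intro subdegree_leI) simp
  hence "D dvd fps_X" using nz by (subst fps_dvd_iff) simp_all
  thus ?thesis by simp
qed

lemma deg_exp_nth: "deg_exp lam a $ n = lam ^ n * ((a / lam) gchoose n)"
  by (simp add: deg_exp_def fps_compose_linear)

lemma GT:
  assumes lam: "lam \<noteq> 0"
  shows "(fps_X / (deg_exp lam (1/2) - deg_exp lam (-1/2))) oo TT lam
     = fps_X / (fps_exp (1/2) - fps_exp (-1/2)) * Abs_fps (\<lambda>j. lam ^ j / fact (Suc j))"
proof -
  let ?D = "deg_exp lam (1/2) - deg_exp lam (-1/2)"
  let ?D' = "fps_exp (1/2) - fps_exp (-1/2) :: real fps"
  let ?P = "Abs_fps (\<lambda>j. lam ^ j / fact (Suc j))"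
  let ?G = "fps_X / ?D" let ?G' = "fps_X / ?D'"
  have D1: "?D $ 1 = 1" using lam by (simp add: deg_exp_nth)
  have D0: "?D $ 0 = 0" by (simp add: deg_exp_nth)
  have D'1: "?D' $ 1 = 1" by simp
  have D'0: "?D' $ 0 = 0" by simp
  have Dc: "?D oo TT lam = ?D'" using lam by (simp add: fps_compose_sub_distrib L2)
  have TP: "TT lam = fps_X * ?P"
  proof (rule fps_ext)
    fix n show "TT lam $ n = (fps_X * ?P) $ n"
      using lam by (cases n) (simp_all add: TT_def algebra_simps)
  qed
  have "(?G oo TT lam) * ?D' = (?G * ?D) oo TT lam"
    by (subst fps_compose_mult_distrib) (simp_all only: Dc TT0)
  also have "\<dots> = TT lam" using D0 D1 by (simp add: div_X_mult)
  also have "\<dots> = (?G' * ?P) * ?D'"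
    unfolding TP using div_X_mult[OF D'0] D'1 by (simp add: algebra_simps)
  finally have "(?G oo TT lam) * ?D' = (?G' * ?P) * ?D'" .
  moreover have "?D' \<noteq> 0" using D'1 by auto
  ultimately show ?thesis by simp
qed

lemma inner:
  fixes H :: "real fps"
  shows "fact m * (fps_cos y * H) $ m =
     (\<Sum>l=0..m div 2. real (m choose (2*l)) * (-1)^l * y^(2*l) * (fact (m - 2*l) * H $ (m - 2*l)))"
proof -
  define g where "g i = real (m choose i) * (-1)^(i div 2) * y^i * (fact (m - i) * H $ (m - i))" for i
  have "fact m * (fps_cos y * H) $ m = (\<Sum>i=0..m. fact m * (fps_cos y $ i * H $ (m - i)))"
    by (simp add: fps_mult_nth sum_distrib_left)
  also have "\<dots> = (\<Sum>i=0..m. if even i then g i else 0)"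
  proof (rule sum.cong[OF refl])
    fix i assume "i \<in> {0..m}"
    hence im: "i \<le> m" by simp
    have f: "(fact m :: real) = fact i * fact (m - i) * real (m choose i)"
      using binomial_fact_lemma[OF im] by (metis of_nat_fact of_nat_mult)
    show "fact m * (fps_cos y $ i * H $ (m - i)) = (if even i then g i else 0)"
      by (simp add: fps_cos_def g_def f field_simps)
  qed
  also have "\<dots> = sum g {i \<in> {0..m}. even i}"
    by (rule sum.inter_filter[symmetric]) simp
  also have "{i \<in> {0..m}. even i} = (\<lambda>l. 2*l) ` {0..m div 2}"
    by (auto elim!: evenE)
  also have "sum g \<dots> = (\<Sum>l=0..m div 2. g (2*l))"
    by (subst sum.reindex) (auto simp: inj_on_def)
  also have "\<dots> = (\<Sum>l=0..m div 2. real (m choose (2*l)) * (-1)^l * y^(2*l) * (fact (m - 2*l) * H $ (m - 2*l)))"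
    by (simp add: g_def)
  finally show ?thesis .
qed

theorem theorem2p5:
  fixes lam x y :: real and n :: nat
  assumes "lam \<noteq> 0"
  shows "(\<Sum>k=0..n. lam ^ (n - k) * deg_cos_bernoulli lam k x y * real (Stirling n k)) =
         (\<Sum>m=0..n. \<Sum>l=0..m div 2.
            lam ^ (n - m) / real (n - m + 1) * real (n choose m) * real (m choose (2 * l))
            * (-1) ^ l * y ^ (2 * l) * bernoulli2 (m - 2 * l) x)"
proof -
  note lam = assms
  define G where "G = fps_X / (deg_exp lam (1/2) - deg_exp lam (-1/2))"
  define G' where "G' = fps_X / (fps_exp (1/2) - fps_exp (-1/2) :: real fps)"
  define P where "P = Abs_fps (\<lambda>j. lam ^ j / fact (Suc j) :: real)"
  define F where "F = G * deg_exp lam x * deg_cos lam y"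
  define H where "H = G' * fps_exp x"
  define K where "K = fps_cos y * H"
  define T where "T = TT lam"
  have T0: "T $ 0 = 0" by (simp add: T_def)
  have dcb: "deg_cos_bernoulli lam k x y = fact k * F $ k" for k
    by (simp add: deg_cos_bernoulli_def F_def G_def)
  have b2: "bernoulli2 j x = fact j * H $ j" for j
    by (simp add: bernoulli2_def H_def G'_def)
  have FT: "F oo T = K * P"
  proof -
    have "F oo T = (G oo T) * (deg_exp lam x oo T) * (deg_cos lam y oo T)"
      unfolding F_def by (simp add: fps_compose_mult_distrib[OF T0])
    also have "\<dots> = (G' * P) * fps_exp x * fps_cos y"
      unfolding T_def G_def G'_def P_def by (simp only: GT[OF lam] L2[OF lam] L4[OF lam])
    finally show ?thesis by (simp add: K_def H_def algebra_simps)
  qed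
  have Tk: "fact n * (T ^ k) $ n = (1/lam)^k * (lam ^ n * fact k * real (Stirling n k))" for k
  proof -
    have "T ^ k = fps_const ((1/lam)^k) * (fps_exp lam - 1) ^ k"
      by (simp add: T_def TT_def power_mult_distrib fps_const_power)
    hence "fact n * (T ^ k) $ n = (1/lam)^k * (fact n * ((fps_exp lam - 1) ^ k) $ n)"
      by simp
    thus ?thesis by (simp only: stirling_fps)
  qed
  have lhs: "(\<Sum>k=0..n. lam ^ (n - k) * deg_cos_bernoulli lam k x y * real (Stirling n k))
      = fact n * (F oo T) $ n"
  proof -
    have "fact n * (F oo T) $ n = (\<Sum>k=0..n. F $ k * (fact n * (T ^ k) $ n))"
      by (simp add: fps_compose_nth sum_distrib_left algebra_simps)
    also have "\<dots> = (\<Sum>k=0..n. lam ^ (n - k) * deg_cos_bernoulli lam k x y * real (Stirling n k))"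
    proof (rule sum.cong[OF refl])
      fix k assume "k \<in> {0..n}"
      hence kn: "k \<le> n" by simp
      have p: "lam ^ n = lam ^ k * lam ^ (n - k)"
        using kn by (simp flip: power_add)
      show "F $ k * (fact n * (T ^ k) $ n) = lam ^ (n - k) * deg_cos_bernoulli lam k x y * real (Stirling n k)"
        unfolding Tk dcb p using lam by (simp add: power_one_over field_simps)
    qed
    finally show ?thesis by simp
  qed
  have rhs: "fact n * (K * P) $ n = (\<Sum>m=0..n. \<Sum>l=0..m div 2.
            lam ^ (n - m) / real (n - m + 1) * real (n choose m) * real (m choose (2 * l))
            * (-1) ^ l * y ^ (2 * l) * bernoulli2 (m - 2 * l) x)"
  proof -
    have "fact n * (K * P) $ n = (\<Sum>m=0..n. (fact n * P $ (n - m)) * K $ m)"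
      by (simp add: fps_mult_nth sum_distrib_left algebra_simps)
    also have "\<dots> = (\<Sum>m=0..n. (lam ^ (n - m) / real (n - m + 1) * real (n choose m)) * (fact m * K $ m))"
    proof (rule sum.cong[OF refl])
      fix m assume "m \<in> {0..n}"
      hence mn: "m \<le> n" by simp
      have f: "(fact n :: real) = fact m * fact (n - m) * real (n choose m)"
        using binomial_fact_lemma[OF mn] by (metis of_nat_fact of_nat_mult)
      have f2: "(fact (Suc (n - m)) :: real) = real (n - m + 1) * fact (n - m)"
        by simp
      show "(fact n * P $ (n - m)) * K $ m = (lam ^ (n - m) / real (n - m + 1) * real (n choose m)) * (fact m * K $ m)"
      proof -
        have nz: "fact (n - m) \<noteq> (0::real)" "real (n - m + 1) \<noteq> 0" by simp_all
        have "fact n * P $ (n - m) = lam ^ (n - m) / real (n - m + 1) * real (n choose m) * fact m"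
          unfolding P_def fps_nth_Abs_fps f f2 using nz by (simp only: field_simps) simp
        thus ?thesis by simp
      qed
    qed
    also have "\<dots> = (\<Sum>m=0..n. \<Sum>l=0..m div 2.
            lam ^ (n - m) / real (n - m + 1) * real (n choose m) * real (m choose (2 * l))
            * (-1) ^ l * y ^ (2 * l) * bernoulli2 (m - 2 * l) x)"
      unfolding K_def inner b2 by (simp add: sum_distrib_left algebra_simps)
    finally show ?thesis .
  qed
  show ?thesis using lhs rhs FT by simp
qed

end
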